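(* Let $k\ge 2$ and let $\mathrm{R}_{2k}=\{a_0,a_1,\dots,a_{2k-1}\}$ be the dihedral quandle of order $2k$, i.e. the set $\mathbb{Z}_{2k}$ with operation $a_i\cdot a_j=a_{(2j-i)\bmod 2k}$. In the integral quandle ring $\mathbb{Z}[\mathrm{R}_{2k}]$, let $e_i=a_i-a_0$ for $i=1,\dots,2k-1$. Then $e_i\cdot e_j=e_i\cdot e_{k+j}$ for all $j=1,2,\dots,k-1$ and all $i=1,2,\dots,2k-1$.
   Context: The quandle ring $\mathbb{Z}[A]$ of a quandle $A$ is the free abelian group on $A$ with multiplication given by the bilinear extension of the quandle operation: $\left(\sum_i r_i a_i\right)\cdot\left(\sum_j s_j a_j\right)=\sum_{i,j} r_i s_j (a_i\cdot a_j)$. *)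

theory Defs
  imports Main
begin

definition dihedral_op :: "nat \<Rightarrow> nat \<Rightarrow> nat \<Rightarrow> nat" where
  "dihedral_op n i j = nat ((2 * int j - int i) mod int n)"

text \<open>Elements of the integral quandle ring Z[A] for a finite quandle with carrier A
  are represented as coefficient functions A -> int (zero outside A).\<close>
definition qbasis :: "'a \<Rightarrow> ('a \<Rightarrow> int)" where
  "qbasis a = (\<lambda>x. if x = a then 1 else 0)"

text \<open>Bilinear extension of the quandle operation:
  (sum_a u_a a) . (sum_b v_b b) = sum_{a,b} u_a v_b (a . b).\<close>
definition qring_mult :: "'a set \<Rightarrow> ('a \<Rightarrow> 'a \<Rightarrow> 'a) \<Rightarrow> ('a \<Rightarrow> int) \<Rightarrow> ('a \<Rightarrow> int) \<Rightarrow> ('a \<Rightarrow> int)" where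
  "qring_mult A op u v = (\<lambda>c. \<Sum>p\<in>{p \<in> A \<times> A. op (fst p) (snd p) = c}. u (fst p) * v (snd p))"

definition dihedral_e :: "nat \<Rightarrow> (nat \<Rightarrow> int)" where
  "dihedral_e i = qbasis i - qbasis 0"

end

theory Submission
  imports Defs
begin

lemma qm_alt:
  assumes "finite A"
  shows "qring_mult A op u v c = (\<Sum>a\<in>A. \<Sum>b\<in>A. if op a b = c then u a * v b else 0)"
proof -
  have "qring_mult A op u v c = (\<Sum>p\<in>A \<times> A. if op (fst p) (snd p) = c then u (fst p) * v (snd p) else 0)"
    unfolding qring_mult_def using assms
    by (simp add: sum.inter_filter[symmetric] finite_cartesian_product)
  also have "\<dots> = (\<Sum>a\<in>A. \<Sum>b\<in>A. if op a b = c then u a * v b else 0)"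
    by (simp add: sum.cartesian_product split_beta)
  finally show ?thesis .
qed

lemma inner:
  assumes "finite A" "b0 \<in> A" "0 \<in> A"
  shows "(\<Sum>b\<in>A. if op a b = c then u a * dihedral_e b0 b else 0)
     = (if op a b0 = c then u a else 0) - (if op a 0 = c then u a else 0)"
proof -
  have "(\<Sum>b\<in>A. if op a b = c then u a * dihedral_e b0 b else 0)
     = (\<Sum>b\<in>A. (if b = b0 then (if op a b = c then u a else 0) else 0))
       - (\<Sum>b\<in>A. (if b = 0 then (if op a b = c then u a else 0) else 0))"
    unfolding sum_subtractf[symmetric]
    by (rule sum.cong) (auto simp: dihedral_e_def qbasis_def)
  also have "\<dots> = (if op a b0 = c then u a else 0) - (if op a 0 = c then u a else 0)"
    using assms by (simp add: sum.delta)
  finally show ?thesis .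
qed

theorem lemma2p3:
  fixes k :: nat
  assumes "k \<ge> 2"
  shows "\<forall>i\<in>{1..2*k-1}. \<forall>j\<in>{1..k-1}.
           qring_mult {0..<2*k} (dihedral_op (2*k)) (dihedral_e i) (dihedral_e j)
         = qring_mult {0..<2*k} (dihedral_op (2*k)) (dihedral_e i) (dihedral_e (k+j))"
proof (intro ballI ext)
  fix i j c
  assume j: "j \<in> {1..k-1}"
  have jA: "j \<in> {0..<2*k}" "k + j \<in> {0..<2*k}" "0 \<in> {0..<2*k}" using j assms by auto
  have op: "dihedral_op (2*k) a (k+j) = dihedral_op (2*k) a j" for a
  proof -
    have "2 * int (k+j) - int a = (2 * int j - int a) + 1 * int (2*k)" by simp
    then show ?thesis unfolding dihedral_op_def by (metis mod_add_self2 mult_1)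
  qed
  show "qring_mult {0..<2*k} (dihedral_op (2*k)) (dihedral_e i) (dihedral_e j) c
      = qring_mult {0..<2*k} (dihedral_op (2*k)) (dihedral_e i) (dihedral_e (k+j)) c"
    unfolding qm_alt[OF finite_atLeastLessThan]
    by (rule sum.cong[OF refl])
      (simp only: inner[OF finite_atLeastLessThan jA(1) jA(3)] inner[OF finite_atLeastLessThan jA(2) jA(3)] op)
qed

end
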